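(* Let $G$ be an $n$-node graph with a colored tree labeling, let $k\ge1$, and let $c\ge 3/2$ be a constant with $p=(c\log n)/n^{1/k}\le 1$. Suppose each node of $G$ is independently chosen to be a way-point with probability $p$. Call a short segment any directed path or cycle $S$ contained in some maximal connected subgraph $C$ of $G_k$ all of whose nodes have the same level $\ell$ with $1<\ell\le k$, such that $|S|\le 4n^{1/k}$; call $S$ crowded if it contains more than $8c\log n$ way-points. Then \[ \Pr(G_k \text{ contains a crowded short segment}) = O(1/n). \]
   Context: Colored tree labelings. A colored tree labeling of a graph $G$ of bounded degree assigns to each node $v$ a parent $\mathrm{P}(v)$, a left child $\mathrm{LC}(v)$ and a right child $\mathrm{RC}(v)$, each a port number of $v$ or $\bot$ (a non-$\bot$ value is identified with the neighbor reached through that port; the non-$\bot$ values at $v$ are pairwise distinct), and a color $\chi_{\mathrm{in}}(v)\in\{R,B\}$. Hierarchical forest. Define $\mathrm{level}(v)=1$ if $\mathrm{RC}(v)=\bot$ and $\mathrm{level}(v)=1+\mathrm{level}(\mathrm{RC}(v))$ otherwise. For $k\ge1$, the hierarchical forest $G_k$ contains the edge $\{u,v\}$ iff $\mathrm{level}(u),\mathrm{level}(v)\le k$, $v=\mathrm{P}(u)$, and either ($u=\mathrm{LC}(v)$ and $\mathrm{level}(v)=\mathrm{level}(u)$) or ($u=\mathrm{RC}(v)$ and $\mathrm{level}(v)=\mathrm{level}(u)+1$); it is viewed as directed from $v$ (parent) to $u$ (child). Each maximal connected subgraph of $G_k$ whose nodes all have the same level is a directed path or cycle along $\mathrm{LC}$-edges.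 Here $\log$ denotes the natural logarithm (the statement also holds with base 2). *)

theory Defs
  imports "HOL-Probability.Probability"
begin

datatype color = R | B

text \<open>A port value at v is identified with the neighbour it
points to, so P, LC, RC return an optional neighbour (None = bottom).\<close>

definition colored_tree_labeling ::
  "nat set \<Rightarrow> (nat \<Rightarrow> nat \<Rightarrow> bool) \<Rightarrow> (nat \<Rightarrow> nat option) \<Rightarrow> (nat \<Rightarrow> nat option)
   \<Rightarrow> (nat \<Rightarrow> nat option) \<Rightarrow> (nat \<Rightarrow> color) \<Rightarrow> bool" where
  "colored_tree_labeling V E P LC RC chi \<longleftrightarrow>
     (\<forall>u v. E u v \<longrightarrow> u \<in> V \<and> v \<in> V \<and> E v u \<and> u \<noteq> v) \<and>
     (\<forall>v\<in>V. \<forall>u. (P v = Some u \<or> LC v = Some u \<or> RC v = Some u) \<longrightarrow> E v u) \<and>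
     (\<forall>v\<in>V. (P v \<noteq> None \<and> LC v \<noteq> None \<longrightarrow> P v \<noteq> LC v) \<and>
             (P v \<noteq> None \<and> RC v \<noteq> None \<longrightarrow> P v \<noteq> RC v) \<and>
             (LC v \<noteq> None \<and> RC v \<noteq> None \<longrightarrow> LC v \<noteq> RC v))"

inductive has_level :: "(nat \<Rightarrow> nat option) \<Rightarrow> nat \<Rightarrow> nat \<Rightarrow> bool" for RC where
  base: "RC v = None \<Longrightarrow> has_level RC v 1"
| step: "RC v = Some u \<Longrightarrow> has_level RC u l \<Longrightarrow> has_level RC v (Suc l)"

definition gk_edge ::
  "nat set \<Rightarrow> (nat \<Rightarrow> nat option) \<Rightarrow> (nat \<Rightarrow> nat option) \<Rightarrow> (nat \<Rightarrow> nat option)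
   \<Rightarrow> nat \<Rightarrow> nat \<Rightarrow> nat \<Rightarrow> bool" where
  "gk_edge V P LC RC k v u \<longleftrightarrow> u \<in> V \<and> v \<in> V \<and>
     (\<exists>lu lv. has_level RC u lu \<and> has_level RC v lv \<and> lu \<le> k \<and> lv \<le> k \<and>
        P u = Some v \<and>
        ((LC v = Some u \<and> lv = lu) \<or> (RC v = Some u \<and> lv = lu + 1)))"

definition is_dpath ::
  "nat set \<Rightarrow> (nat \<Rightarrow> nat option) \<Rightarrow> (nat \<Rightarrow> nat option) \<Rightarrow> (nat \<Rightarrow> nat option)
   \<Rightarrow> nat \<Rightarrow> nat list \<Rightarrow> bool" where
  "is_dpath V P LC RC k xs \<longleftrightarrow> xs \<noteq> [] \<and> distinct xs \<and> set xs \<subseteq> V \<and>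
     (\<forall>i. Suc i < length xs \<longrightarrow> gk_edge V P LC RC k (xs ! i) (xs ! Suc i))"

definition is_dcycle ::
  "nat set \<Rightarrow> (nat \<Rightarrow> nat option) \<Rightarrow> (nat \<Rightarrow> nat option) \<Rightarrow> (nat \<Rightarrow> nat option)
   \<Rightarrow> nat \<Rightarrow> nat list \<Rightarrow> bool" where
  "is_dcycle V P LC RC k xs \<longleftrightarrow> is_dpath V P LC RC k xs \<and>
     gk_edge V P LC RC k (last xs) (hd xs)"

text \<open>Short segment: directed path or cycle of G_k, all of whose nodes have the same level l
with 1 < l \<le> k (hence it lies in a maximal same-level connected subgraph of G_k),
with at most 4 n^(1/k) nodes.\<close>
definition short_segment ::
  "nat set \<Rightarrow> (nat \<Rightarrow> nat option) \<Rightarrow> (nat \<Rightarrow> nat option) \<Rightarrow> (nat \<Rightarrow> nat option)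
   \<Rightarrow> nat \<Rightarrow> nat list \<Rightarrow> bool" where
  "short_segment V P LC RC k xs \<longleftrightarrow>
     (is_dpath V P LC RC k xs \<or> is_dcycle V P LC RC k xs) \<and>
     (\<exists>l. 1 < l \<and> l \<le> k \<and> (\<forall>x\<in>set xs. has_level RC x l)) \<and>
     real (length xs) \<le> 4 * real (card V) powr (1 / real k)"

definition crowded :: "nat set \<Rightarrow> real \<Rightarrow> (nat \<Rightarrow> bool) \<Rightarrow> nat list \<Rightarrow> bool" where
  "crowded V c w xs \<longleftrightarrow> real (card {x \<in> set xs. w x}) > 8 * c * ln (real (card V))"

definition waypoints :: "nat set \<Rightarrow> real \<Rightarrow> (nat \<Rightarrow> bool) pmf" where
  "waypoints V p = Pi_pmf V False (\<lambda>_. bernoulli_pmf p)"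

end

theory Submission
  imports Defs "HOL-Analysis.Harmonic_Numbers"
begin

lemma has_level_unique:
  "has_level RC v l \<Longrightarrow> has_level RC v l' \<Longrightarrow> l = l'"
proof (induction arbitrary: l' rule: has_level.induct)
  case (base v)
  from base.prems show ?case
  proof (cases rule: has_level.cases)
    case base
    then show ?thesis by simp
  next
    case (step u l)
    then show ?thesis using \<open>RC v = None\<close> by simp
  qed
next
  case (step v u l)
  from step.prems show ?case
  proof (cases rule: has_level.cases)
    case base
    then show ?thesis using step.hyps(1) by simp
  next
    case (step u' l'')
    then have "u' = u" using \<open>RC v = Some u\<close> by simp
    then have "l = l''" using step.IH step by simp
    then show ?thesis using step by simp
  qed
qed

primrec lcs :: "(nat \<Rightarrow> nat option) \<Rightarrow> nat \<Rightarrow> nat \<Rightarrow> nat option" where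
  "lcs LC x 0 = Some x"
| "lcs LC x (Suc i) = Option.bind (lcs LC x i) LC"

lemma seg_chain:
  assumes "short_segment V P LC RC k xs"
  shows "i < length xs \<Longrightarrow> lcs LC (hd xs) i = Some (xs ! i)"
proof (induction i)
  case 0
  have "xs \<noteq> []" using assms unfolding short_segment_def is_dcycle_def is_dpath_def by auto
  then show ?case by (simp add: hd_conv_nth)
next
  case (Suc i)
  have dp: "is_dpath V P LC RC k xs" using assms unfolding short_segment_def is_dcycle_def by auto
  obtain l where l: "\<forall>x\<in>set xs. has_level RC x l" using assms unfolding short_segment_def by auto
  have e: "gk_edge V P LC RC k (xs ! i) (xs ! Suc i)" using dp Suc.prems unfolding is_dpath_def by auto
  have l1: "has_level RC (xs ! i) l" "has_level RC (xs ! Suc i) l" using l Suc.prems by auto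
  from e obtain lu lv where h: "has_level RC (xs ! Suc i) lu" "has_level RC (xs ! i) lv"
    "(LC (xs ! i) = Some (xs ! Suc i) \<and> lv = lu) \<or> (RC (xs ! i) = Some (xs ! Suc i) \<and> lv = lu + 1)"
    unfolding gk_edge_def by blast
  have "lu = l" "lv = l" using h l1 has_level_unique by blast+
  then have "LC (xs ! i) = Some (xs ! Suc i)" using h by auto
  then show ?case using Suc by simp
qed

lemma chernoff:
  fixes V T :: "nat set"
  assumes fin: "finite V" and TV: "T \<subseteq> V" and p0: "0 \<le> p" and p1: "p \<le> 1"
  shows "measure_pmf.prob (Pi_pmf V False (\<lambda>_. bernoulli_pmf p))
           {w. a < real (card {y\<in>T. w y})} \<le> exp (p * real (card T)) / 2 powr a"
proof -
  let ?M = "Pi_pmf V False (\<lambda>_. bernoulli_pmf p)"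
  define f where "f y b = (if y \<in> T \<and> b then 2 else (1::real))" for y b
  define u where "u w = (\<Prod>y\<in>V. f y (w y))" for w :: "nat \<Rightarrow> bool"
  have u_eq: "u w = 2 ^ card {y\<in>T. w y}" for w
  proof -
    have "u w = (\<Prod>y\<in>V \<inter> {y. y \<in> T \<and> w y}. 2) * (\<Prod>y\<in>V \<inter> - {y. y \<in> T \<and> w y}. 1)"
      unfolding u_def f_def using fin by (rule prod.If_cases)
    also have "V \<inter> {y. y \<in> T \<and> w y} = {y\<in>T. w y}" using TV by auto
    finally show ?thesis by simp
  qed
  have fin2: "finite {y\<in>T. w y}" for w using fin TV finite_subset by (metis (no_types, lifting) mem_Collect_eq subsetI subset_trans)
  have integ: "integrable ?M u"
    unfolding u_def f_def by (rule integrable_prod_Pi_pmf[OF fin]) (auto intro!: integrable_measure_pmf_finite)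
  have E: "measure_pmf.expectation ?M u = (\<Prod>y\<in>V. measure_pmf.expectation (bernoulli_pmf p) (f y))"
    unfolding u_def by (rule expectation_prod_Pi_pmf[OF fin]) (auto simp: f_def intro!: integrable_measure_pmf_finite)
  also have "\<dots> = (\<Prod>y\<in>V. if y \<in> T then 1 + p else 1)"
    using p0 p1 by (intro prod.cong) (auto simp: f_def)
  also have "\<dots> = (1 + p) ^ card T"
    using fin TV by (simp add: prod.If_cases Int_absorb1)
  also have "\<dots> \<le> exp p ^ card T"
    by (intro power_mono) (use p0 exp_ge_add_one_self[of p] in auto)
  also have "\<dots> = exp (p * real (card T))" by (metis exp_of_nat_mult mult.commute)
  finally have Eb: "measure_pmf.expectation ?M u \<le> exp (p * real (card T))" .
  have sub: "{w. a < real (card {y\<in>T. w y})} \<subseteq> {w \<in> space ?M. u w \<ge> 2 powr a}"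
  proof
    fix w assume "w \<in> {w. a < real (card {y\<in>T. w y})}"
    then have "a \<le> real (card {y\<in>T. w y})" by auto
    then have "2 powr a \<le> 2 powr real (card {y\<in>T. w y})" by simp
    then show "w \<in> {w \<in> space ?M. u w \<ge> 2 powr a}" by (simp add: u_eq powr_realpow)
  qed
  have "measure_pmf.prob ?M {w. a < real (card {y\<in>T. w y})} \<le> measure_pmf.prob ?M {w \<in> space ?M. u w \<ge> 2 powr a}"
    by (rule measure_pmf.finite_measure_mono[OF sub]) simp
  also have "\<dots> \<le> measure_pmf.expectation ?M u / 2 powr a"
    by (rule integral_Markov_inequality_measure[OF integ]) (auto simp: u_eq)
  also have "\<dots> \<le> exp (p * real (card T)) / 2 powr a"
    by (intro divide_right_mono Eb) simp
  finally show ?thesis .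
qed

theorem mainTheorem8:
  shows "\<exists>C>0. \<forall>(V::nat set) E P LC RC (chi::nat \<Rightarrow> color) (k::nat) (c::real).
    finite V \<and> card V \<ge> 1 \<and> colored_tree_labeling V E P LC RC chi \<and> k \<ge> 1 \<and> c \<ge> 3/2 \<and>
    c * ln (real (card V)) / real (card V) powr (1 / real k) \<le> 1 \<longrightarrow>
    measure_pmf.prob
      (waypoints V (c * ln (real (card V)) / real (card V) powr (1 / real k)))
      {w. \<exists>xs. short_segment V P LC RC k xs \<and> crowded V c w xs}
    \<le> C / real (card V)"
proof (intro exI[of _ 1] conjI allI impI)
  fix V :: "nat set" and E P LC RC and chi :: "nat \<Rightarrow> color" and k :: nat and c :: real
  assume A: "finite V \<and> card V \<ge> 1 \<and> colored_tree_labeling V E P LC RC chi \<and> k \<ge> 1 \<and> c \<ge> 3/2 \<and>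
    c * ln (real (card V)) / real (card V) powr (1 / real k) \<le> 1"
  define n where "n = real (card V)"
  define p where "p = c * ln n / n powr (1 / real k)"
  define Lr where "Lr = 4 * n powr (1 / real k)"
  define N where "N = nat \<lfloor>Lr\<rfloor>"
  define a where "a = 8 * c * ln n"
  define Tx where "Tx x = {y \<in> V. \<exists>i<N. lcs LC x i = Some y}" for x
  have fin: "finite V" and n1: "n \<ge> 1" and c: "c \<ge> 3/2" and p1: "p \<le> 1"
    using A by (auto simp: n_def p_def)
  have lnn: "ln n \<ge> 0" using n1 by simp
  have npos: "n powr (1 / real k) > 0" using n1 by simp
  have p0: "p \<ge> 0" unfolding p_def using c lnn npos by simp
  have Lr0: "Lr \<ge> 0" unfolding Lr_def using npos by simp
  have pLr: "p * Lr = 4 * c * ln n" unfolding p_def Lr_def using npos by (simp add: field_simps)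
  have TxV: "Tx x \<subseteq> V" for x unfolding Tx_def by auto
  have fT: "finite (Tx z)" for z using TxV fin by (meson finite_subset)
  have cardT: "real (card (Tx x)) \<le> Lr" for x
  proof -
    have "Tx x \<subseteq> (\<lambda>i. the (lcs LC x i)) ` {..<N}" unfolding Tx_def by force
    then have "card (Tx x) \<le> card ((\<lambda>i. the (lcs LC x i)) ` {..<N})" by (intro card_mono) auto
    also have "\<dots> \<le> card {..<N}" by (rule card_image_le) simp
    finally have "card (Tx x) \<le> card {..<N}" .
    then have "real (card (Tx x)) \<le> real N" by simp
    also have "\<dots> \<le> Lr" unfolding N_def using Lr0 by simp
    finally show ?thesis .
  qed
  have sub: "{w. \<exists>xs. short_segment V P LC RC k xs \<and> crowded V c w xs}
     \<subseteq> (\<Union>x\<in>V. {w. a < real (card {y\<in>Tx x. w y})})"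
  proof
    fix w assume "w \<in> {w. \<exists>xs. short_segment V P LC RC k xs \<and> crowded V c w xs}"
    then obtain xs where ss: "short_segment V P LC RC k xs" and cr: "crowded V c w xs" by auto
    have dp: "is_dpath V P LC RC k xs" using ss unfolding short_segment_def is_dcycle_def by auto
    then have ne: "xs \<noteq> []" and sV: "set xs \<subseteq> V" unfolding is_dpath_def by auto
    have hV: "hd xs \<in> V" using ne sV by auto
    have len: "real (length xs) \<le> Lr" using ss unfolding short_segment_def Lr_def n_def by auto
    have "set xs \<subseteq> Tx (hd xs)"
    proof
      fix y assume "y \<in> set xs"
      then obtain i where i: "i < length xs" "y = xs ! i" by (auto simp: in_set_conv_nth)
      have "real (Suc i) \<le> Lr" using i len by linarith
      then have "real_of_int (int (Suc i)) \<le> Lr" by simp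
      then have "int (Suc i) \<le> \<lfloor>Lr\<rfloor>" by (simp only: le_floor_iff)
      then have "i < N" unfolding N_def by linarith
      then show "y \<in> Tx (hd xs)" unfolding Tx_def using seg_chain[OF ss i(1)] i sV by auto
    qed
    then have "card {y \<in> set xs. w y} \<le> card {y\<in>Tx (hd xs). w y}"
      by (intro card_mono) (use fT in auto)
    then have "a < real (card {y\<in>Tx (hd xs). w y})"
      using cr unfolding crowded_def a_def n_def by linarith
    then show "w \<in> (\<Union>x\<in>V. {w. a < real (card {y\<in>Tx x. w y})})" using hV by auto
  qed
  let ?M = "waypoints V p"
  have "measure_pmf.prob (waypoints V (c * ln (real (card V)) / real (card V) powr (1 / real k)))
      {w. \<exists>xs. short_segment V P LC RC k xs \<and> crowded V c w xs}
     = measure_pmf.prob ?M {w. \<exists>xs. short_segment V P LC RC k xs \<and> crowded V c w xs}"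
    by (simp add: p_def n_def)
  also have "\<dots> \<le> measure_pmf.prob ?M (\<Union>x\<in>V. {w. a < real (card {y\<in>Tx x. w y})})"
    by (rule measure_pmf.finite_measure_mono[OF sub]) simp
  also have "\<dots> \<le> (\<Sum>x\<in>V. measure_pmf.prob ?M {w. a < real (card {y\<in>Tx x. w y})})"
    by (rule measure_pmf.finite_measure_subadditive_finite[OF fin]) simp
  also have "\<dots> \<le> (\<Sum>x\<in>V. exp (4 * c * ln n) / 2 powr a)"
  proof (rule sum_mono)
    fix x assume "x \<in> V"
    have "measure_pmf.prob ?M {w. a < real (card {y\<in>Tx x. w y})} \<le> exp (p * real (card (Tx x))) / 2 powr a"
      unfolding waypoints_def by (rule chernoff[OF fin TxV p0 p1])
    also have "\<dots> \<le> exp (4 * c * ln n) / 2 powr a"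
      by (intro divide_right_mono) (use mult_left_mono[OF cardT p0] pLr in auto)
    finally show "measure_pmf.prob ?M {w. a < real (card {y\<in>Tx x. w y})} \<le> exp (4 * c * ln n) / 2 powr a" .
  qed
  also have "\<dots> = n * (exp (4 * c * ln n) / 2 powr a)" by (simp add: n_def)
  also have "\<dots> \<le> n * exp (- 2 * ln n)"
  proof (rule mult_left_mono)
    have "2 powr a = exp (a * ln 2)" by (simp add: powr_def mult.commute)
    then have "exp (4 * c * ln n) / 2 powr a = exp (4 * c * ln n - a * ln 2)" by (simp add: exp_diff)
    also have "\<dots> \<le> exp (- 2 * ln n)"
    proof -
      have l2: "ln (2::real) \<ge> 2/3" by (rule ln2_ge_two_thirds)
      have m: "(3/2) * ln n * (4/3) \<le> c * ln n * (8 * ln 2 - 4)"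
        by (intro mult_mono) (use c lnn l2 in auto)
      have "4 * c * ln n - a * ln 2 = - (c * ln n * (8 * ln 2 - 4))"
        unfolding a_def by (simp add: algebra_simps)
      then have "4 * c * ln n - a * ln 2 \<le> - 2 * ln n" using m by linarith
      then show ?thesis by simp
    qed
    finally show "exp (4 * c * ln n) / 2 powr a \<le> exp (- 2 * ln n)" .
  next
    show "0 \<le> n" using n1 by simp
  qed
  also have "\<dots> = 1 / real (card V)"
  proof -
    have "exp (- 2 * ln n) = n powr (- 2)" using n1 by (simp add: powr_def mult.commute)
    also have "\<dots> = 1 / n powr 2" by (simp add: powr_minus_divide)
    also have "\<dots> = 1 / n ^ 2" using n1 by (simp add: powr_realpow)
    finally have "exp (- 2 * ln n) = 1 / n ^ 2" .
    then show ?thesis using n1 by (simp add: n_def power2_eq_square)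
  qed
  finally show "measure_pmf.prob (waypoints V (c * ln (real (card V)) / real (card V) powr (1 / real k)))
      {w. \<exists>xs. short_segment V P LC RC k xs \<and> crowded V c w xs} \<le> 1 / real (card V)" .
qed simp

end
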